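(* Let $g\ge2$, let $p$ be a prime with $p\equiv1\pmod{4g}$, and let $K$ be a field of characteristic zero. Let $u(T)$ be the unique element of $1+T^{-1}\mathbb{Z}[[T^{-1}]]$ with $u(T)^{2g}-u(T)^{2g-1}+T^{-4g}=0$, and set $x(T)=T^2u(T)$ and $y(T)=-T\,x(T)^g$ in $\mathbb{Z}[[T^{-1}]][T]\subset K((T^{-1}))$. Let $A$ be the $K$-subalgebra of $K((T^{-1}))$ generated by $x(T)$ and $y(T)$. Then there exist $e_0\in\mathbb{Z}_{(p)}^*$, $a(T)\in A\cap\mathbb{Z}[[T^{-1}]][T]$ and $g(T)\in T^{-1}\mathbb{Z}[[T^{-1}]]$ such that $$T^p-e_0T=a(T)+g(T).$$
   Context: $\mathbb{Z}_{(p)}^*$ denotes the units of the localization of $\mathbb{Z}$ at $p$ (i.e. $p$-adic units in $\mathbb{Q}$). Note $y(T)^2=x(T)^{2g+1}+x(T)$, so $A\cong K[x,y]/(y^2-x^{2g+1}-x)$. *)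

theory Defs
  imports "HOL-Computational_Algebra.Computational_Algebra" "HOL-Number_Theory.Number_Theory"
begin

text \<open>We work in K((S)) with S = T^(-1), i.e. the formal Laurent series ring 'a fls,
  where fls_X is S = T^(-1) and fls_X_inv is T.\<close>

text \<open>Coefficients are integers: Z[[T^-1]][T] inside K((T^-1)).\<close>
definition int_coeffs :: "'a::ring_1 fls \<Rightarrow> bool" where
  "int_coeffs f \<longleftrightarrow> (\<forall>n. fls_nth f n \<in> \<int>)"

definition in_Tinv_Z_Tinv :: "'a::ring_1 fls \<Rightarrow> bool" where
  "in_Tinv_Z_Tinv f \<longleftrightarrow> int_coeffs f \<and> (\<forall>n\<le>0. fls_nth f n = 0)"

definition in_one_plus_Tinv_Z_Tinv :: "'a::ring_1 fls \<Rightarrow> bool" where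
  "in_one_plus_Tinv_Z_Tinv f \<longleftrightarrow> in_Tinv_Z_Tinv (f - 1)"

inductive_set subalg_gen :: "'a::field fls set \<Rightarrow> 'a fls set" for G where
  const: "fls_const c \<in> subalg_gen G"
| gen: "f \<in> G \<Longrightarrow> f \<in> subalg_gen G"
| add: "f \<in> subalg_gen G \<Longrightarrow> h \<in> subalg_gen G \<Longrightarrow> f + h \<in> subalg_gen G"
| mult: "f \<in> subalg_gen G \<Longrightarrow> h \<in> subalg_gen G \<Longrightarrow> f * h \<in> subalg_gen G"

definition Zp_unit :: "nat \<Rightarrow> rat \<Rightarrow> bool" where
  "Zp_unit p e \<longleftrightarrow> (\<exists>a b::int. b \<noteq> 0 \<and> e = of_int a / of_int b \<and>
      \<not> int p dvd a \<and> \<not> int p dvd b)"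

end

theory Submission
  imports Defs
begin

notation fls_nth (infixl \<open>$$\<close> 75)

lemma XX: "fls_X * fls_X_inv = (1::'a::field fls)"
  by (simp add: fls_X_inv_times_conv_shift(2))

lemma ic_mult: "int_coeffs (f::'a::comm_ring_1 fls) \<Longrightarrow> int_coeffs g \<Longrightarrow> int_coeffs (f*g)"
  unfolding int_coeffs_def by (auto simp: fls_times_nth(1))

lemma ic_add: "int_coeffs (f::'a::comm_ring_1 fls) \<Longrightarrow> int_coeffs g \<Longrightarrow> int_coeffs (f+g)"
  unfolding int_coeffs_def by auto

lemma ic_diff: "int_coeffs (f::'a::comm_ring_1 fls) \<Longrightarrow> int_coeffs g \<Longrightarrow> int_coeffs (f-g)"
  unfolding int_coeffs_def by auto

lemma ic_uminus: "int_coeffs (f::'a::comm_ring_1 fls) \<Longrightarrow> int_coeffs (-f)"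
  unfolding int_coeffs_def by auto

lemma ic_const: "int_coeffs (fls_const (of_int c) :: 'a::comm_ring_1 fls)"
  unfolding int_coeffs_def by auto

lemma ic_one: "int_coeffs (1 :: 'a::comm_ring_1 fls)"
  unfolding int_coeffs_def by auto

lemma ic_Xinv: "int_coeffs (fls_X_inv :: 'a::comm_ring_1 fls)"
  unfolding int_coeffs_def by auto

lemma ic_pow: "int_coeffs (f::'a::comm_ring_1 fls) \<Longrightarrow> int_coeffs (f^n)"
  by (induction n) (auto intro: ic_mult ic_one)

lemma ic_sum: "(\<And>i. i \<in> S \<Longrightarrow> int_coeffs (F i :: 'a::comm_ring_1 fls)) \<Longrightarrow> int_coeffs (sum F S)"
  unfolding int_coeffs_def by (auto simp: fls_nth_sum intro!: Ints_sum)

lemma sa_pow: "f \<in> subalg_gen G \<Longrightarrow> f ^ n \<in> subalg_gen G"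
proof (induction n)
  case 0
  have "fls_const 1 \<in> subalg_gen G" by (rule subalg_gen.const)
  then show ?case by simp
next
  case (Suc n) then show ?case by (auto intro: subalg_gen.mult)
qed

lemma sa_sum: "(\<And>i. i \<in> S \<Longrightarrow> F i \<in> subalg_gen G) \<Longrightarrow> sum F S \<in> subalg_gen G"
proof (induction S rule: infinite_finite_induct)
  case (infinite A)
  have "fls_const 0 \<in> subalg_gen G" by (rule subalg_gen.const)
  then show ?case using infinite by simp
next
  case empty
  have "fls_const 0 \<in> subalg_gen G" by (rule subalg_gen.const)
  then show ?case by simp
next
  case (insert x F) then show ?case by (auto intro: subalg_gen.add)
qed

lemma sa_uminus: "f \<in> subalg_gen G \<Longrightarrow> - f \<in> subalg_gen G"
proof -
  assume "f \<in> subalg_gen G"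
  moreover have "fls_const (-1) \<in> subalg_gen G" by (rule subalg_gen.const)
  ultimately have "fls_const (-1) * f \<in> subalg_gen G" by (rule subalg_gen.mult[rotated])
  then show ?thesis by (simp add: fls_const_mult_const[symmetric])
qed

theorem lemma4p2:
  fixes g p :: nat and u :: "'a::field_char_0 fls"
  assumes "g \<ge> 2" and "prime p" and "[p = 1] (mod 4 * g)"
    and "in_one_plus_Tinv_Z_Tinv u"
    and "u ^ (2*g) - u ^ (2*g - 1) + fls_X ^ (4*g) = 0"
  shows "let T = (fls_X_inv :: 'a fls); x = T ^ 2 * u; y = - T * x ^ g;
           A = subalg_gen {x, y} in
         \<exists>e0 a h. Zp_unit p e0 \<and> a \<in> A \<and> int_coeffs a \<and> in_Tinv_Z_Tinv h \<and>
           T ^ p - fls_const (of_rat e0) * T = a + h"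
proof -
  define T where "T = (fls_X_inv :: 'a fls)"
  define x where "x = T ^ 2 * u"
  define y where "y = - T * x ^ g"
  define A where "A = subalg_gen {x, y}"
  define S where "S = (fls_X :: 'a fls)"
  have g1: "g \<ge> 1" using assms(1) by simp
  have pm: "p mod (4*g) = 1"
    using assms(3) assms(1) unfolding cong_def by simp
  obtain k where pk: "p = 4*g*k + 1"
    using div_mult_mod_eq[of p "4*g"] pm by (metis mult.commute)
  define N where "N = 2*g*k"
  define j0 where "j0 = (2*g-1)*k"
  define m where "m = 2*g - 1"
  have m2: "2*g = Suc m" using g1 unfolding m_def by simp
  have pN: "p = 2*N + 1" unfolding pk N_def by simp
  have j0N: "j0 \<le> N" unfolding j0_def N_def by simp
  have Np: "N < p" using pN by simp
  define M where "M = x ^ (2*g)"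
  have u1: "\<And>n. n \<le> 0 \<Longrightarrow> (u - 1) $$ n = 0" and uic1: "int_coeffs (u - 1)"
    using assms(4) unfolding in_one_plus_Tinv_Z_Tinv_def in_Tinv_Z_Tinv_def by auto
  have uic: "int_coeffs u"
    using ic_add[OF uic1 ic_one] by simp
  have u0: "u $$ 0 = 1" using u1[of 0] by simp
  have uneg: "\<And>k. k < 0 \<Longrightarrow> u $$ k = 0" using u1 by (metis fls_minus_nth fls_one_nth less_imp_le eq_iff_diff_eq_0 less_irrefl)
  have usub: "fls_subdegree u = 0" by (rule fls_subdegree_eqI) (use u0 uneg in auto)
  have unz: "u \<noteq> 0" using u0 by (metis fls_nonzeroI one_neq_zero)
  have Tnz: "T \<noteq> 0" unfolding T_def by simp
  have Tsub: "fls_subdegree T = -1" unfolding T_def by simp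
  have xnz: "x \<noteq> 0" unfolding x_def using Tnz unz by simp
  have xsub: "fls_subdegree x = -2"
    unfolding x_def using Tnz unz usub Tsub by (simp add: fls_subdegree_pow)
  have Mnz: "M \<noteq> 0" unfolding M_def using xnz by simp
  have Msub: "fls_subdegree M = - 4 * int g"
    unfolding M_def using xsub by (simp add: fls_subdegree_pow)
  have Tic: "int_coeffs T" unfolding T_def by (rule ic_Xinv)
  have xic: "int_coeffs x" unfolding x_def by (intro ic_mult ic_pow Tic uic)
  have yic: "int_coeffs y" unfolding y_def by (intro ic_mult ic_pow ic_uminus Tic xic)
  have TS: "T * S = 1" unfolding T_def S_def by (simp add: XX mult.commute)
  have eq1: "T^2 * x^m = M + 1"
  proof -
    have "T^(4*g) * (u ^ (2*g) - u ^ (2*g - 1) + S ^ (4*g)) = 0"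
      using assms(5) unfolding S_def by simp
    moreover have "T^(4*g) * S^(4*g) = 1" by (metis TS power_mult_distrib power_one)
    moreover have "T^(4*g) * u^(2*g) = M"
      unfolding M_def x_def by (simp add: power_mult_distrib power_mult[symmetric] mult.commute)
    moreover have "T^(4*g) * u^(2*g-1) = T^2 * x^m"
    proof -
      have "4*g = 2 + 2*m" using m2 by simp
      then have "T^(4*g) = T^(2+2*m)" by (rule arg_cong[where f="\<lambda>n. T^n"])
      also have "\<dots> = T^2 * (T^2)^m" by (simp only: power_add power_mult)
      finally have "T^(4*g) = T^2 * (T^2)^m" .
      then show ?thesis unfolding x_def m_def[symmetric] by (simp add: power_mult_distrib)
    qed
    ultimately show ?thesis by (simp add: algebra_simps)
  qed
  have eq2: "T^p * M^j0 = T * (M+1)^N"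
  proof -
    have "M^j0 = (x^m)^N" unfolding M_def j0_def N_def m_def
    proof -
      have "2*g*((2*g-1)*k) = (2*g-1)*(2*g*k)" by simp
      then show "(x ^ (2 * g)) ^ ((2 * g - 1) * k) = (x ^ (2 * g - 1)) ^ (2 * g * k)"
        by (simp only: power_mult[symmetric])
    qed
    moreover have "T^p = T * (T^2)^N" using pN by (simp add: power_add power_mult)
    ultimately have "T^p * M^j0 = T * (T^2 * x^m)^N" by (simp add: power_mult_distrib)
    then show ?thesis using eq1 by simp
  qed
  define F where "F j = fls_const (of_nat (N choose j)) * (T * M^j / M^j0)" for j
  have Tp: "T^p = (\<Sum>j\<le>N. F j)"
  proof -
    have "T^p = T * (M+1)^N / M^j0" using eq2 Mnz by (simp add: field_simps)
    also have "\<dots> = (\<Sum>j\<le>N. of_nat (N choose j) * M^j) * T / M^j0"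
      by (simp add: binomial_ring mult.commute)
    also have "\<dots> = (\<Sum>j\<le>N. F j)"
      unfolding F_def sum_distrib_right sum_divide_distrib
      by (rule sum.cong[OF refl]) (simp add: fls_of_nat mult_ac)
    finally show ?thesis .
  qed
  have spl: "(\<Sum>j\<le>N. F j) = (\<Sum>j<j0. F j) + F j0 + (\<Sum>j\<in>{Suc j0..N}. F j)"
  proof -
    have "{..N} = {..<j0} \<union> {j0..N}" using j0N by auto
    then have "(\<Sum>j\<le>N. F j) = (\<Sum>j<j0. F j) + (\<Sum>j\<in>{j0..N}. F j)"
      by (simp add: sum.union_disjoint ivl_disj_int)
    moreover have "{j0..N} = insert j0 {Suc j0..N}" using j0N by auto
    ultimately show ?thesis by simp
  qed
  define a where "a = (\<Sum>j\<in>{Suc j0..N}. fls_const (of_nat (N choose j)) * (- (y * x^(2*g*(j-j0) - g))))"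
  define h where "h = (\<Sum>j<j0. F j)"
  define c where "c = N choose j0"
  define e0 where "e0 = (of_nat c :: rat)"
  have aF: "a = (\<Sum>j\<in>{Suc j0..N}. F j)"
    unfolding a_def
  proof (rule sum.cong[OF refl])
    fix j assume j: "j \<in> {Suc j0..N}"
    have "T * M^j / M^j0 = T * M^(j-j0)" using j Mnz by (simp add: power_diff)
    also have "\<dots> = T * x^g * x^(2*g*(j-j0) - g)"
    proof -
      have "g*1 \<le> g*(2*(j-j0))" using j by (intro mult_le_mono2) auto
      then have e: "g + (2*g*(j-j0) - g) = 2*g*(j-j0)" by (simp add: mult.assoc)
      show ?thesis unfolding M_def
        using e by (simp only: power_mult[symmetric] mult.assoc power_add[symmetric])
    qed
    also have "\<dots> = - (y * x^(2*g*(j-j0) - g))" unfolding y_def by simp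
    finally show "fls_const (of_nat (N choose j)) * (- (y * x^(2*g*(j-j0) - g))) = F j"
      unfolding F_def by simp
  qed
  have Fj0: "F j0 = fls_const (of_rat e0) * T"
    unfolding F_def e0_def c_def using Mnz by simp
  have main: "T ^ p - fls_const (of_rat e0) * T = a + h"
    using Tp spl aF Fj0 unfolding h_def by simp
  have aA: "a \<in> A"
    unfolding a_def A_def
    by (intro sa_sum subalg_gen.mult subalg_gen.const sa_uminus sa_pow subalg_gen.gen) auto
  have aic: "int_coeffs a"
    unfolding a_def
  proof (intro ic_sum ic_mult ic_uminus ic_pow yic xic)
    fix j show "int_coeffs (fls_const (of_nat (N choose j)) :: 'a fls)"
      using ic_const[of "int (N choose j)"] by simp
  qed
  have hic: "int_coeffs h"
  proof -
    have "h = T^p - fls_const (of_rat e0) * T - a" using main by simp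
    moreover have "int_coeffs (fls_const (of_rat e0) :: 'a fls)"
      using ic_const[of "int c"] unfolding e0_def by simp
    ultimately show ?thesis by (simp add: ic_diff ic_mult ic_pow Tic aic)
  qed
  have hz: "\<forall>n\<le>0. h $$ n = 0"
  proof (intro allI impI)
    fix n :: int assume n: "n \<le> 0"
    have "F j $$ n = 0" if j: "j < j0" for j
    proof -
      have nz: "T * M^j \<noteq> 0" using Tnz Mnz by simp
      have "fls_subdegree (T * M^j / M^j0) = -1 + 4 * int g * (int j0 - int j)"
        using Tnz Mnz Msub Tsub nz by (simp add: fls_divide_subdegree fls_subdegree_pow algebra_simps)
      moreover have "4 * int g * (int j0 - int j) \<ge> 4 * 1 * 1"
        using j g1 by (intro mult_mono) auto
      ultimately have "n < fls_subdegree (fls_const (of_nat (N choose j)) :: 'a fls) + fls_subdegree (T * M^j / M^j0)"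
        using n by simp
      then show ?thesis unfolding F_def by (rule fls_times_nth_eq0)
    qed
    then show "h $$ n = 0" unfolding h_def by (simp add: fls_nth_sum)
  qed
  have Zp: "Zp_unit p e0"
    unfolding Zp_unit_def
  proof (intro exI conjI)
    show "e0 = of_int (int c) / of_int 1" unfolding e0_def by simp
    show "(1::int) \<noteq> 0" by simp
    show "\<not> int p dvd 1" using assms(2) by (metis int_ops(2) of_nat_eq_iff zdvd1_eq not_prime_1 abs_of_nat)
    show "\<not> int p dvd int c"
    proof
      assume "int p dvd int c"
      then have "p dvd c" by simp
      then have "p dvd fact N" unfolding c_def using binomial_fact_lemma[OF j0N]
        by (metis dvd_mult_left dvd_trans dvd_triv_right)
      then have "p \<le> N" using assms(2) by (simp add: prime_dvd_fact_iff)
      then show False using Np by simp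
    qed
  qed
  show ?thesis
    unfolding Let_def T_def[symmetric] x_def[symmetric] y_def[symmetric] A_def[symmetric]
    using Zp aA aic hic hz main unfolding in_Tinv_Z_Tinv_def by blast
qed

end
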